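(* Let $q$ be a prime power and let $\mathcal{F}\subseteq 2^{[n]}$ satisfy $|A\setminus B|\not\equiv 0\pmod q$ for all distinct $A,B\in\mathcal{F}$. Then $$|\mathcal{F}|\le\sum_{i=0}^{q-1}\binom{n-1}{i}.$$
   Context: $[n]=\{1,\ldots,n\}$ and $2^{[n]}$ is the family of all subsets of $[n]$. *)

theory Defs
  imports "HOL-Computational_Algebra.Primes"
begin

definition prime_power :: "nat \<Rightarrow> bool" where
  "prime_power q \<longleftrightarrow> (\<exists>p k. prime p \<and> k \<ge> 1 \<and> q = p ^ k)"

end

theory Submission
  imports Defs "HOL-Number_Theory.Cong" "Jordan_Normal_Form.Determinant"
begin


definition H :: "nat \<Rightarrow> nat \<Rightarrow> int" where
  "H m t = (\<Sum>j=0..m. (-1)^j * int (t choose j))"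

lemma H_Suc: "H m (Suc s) = (-1)^m * int (s choose m)"
proof (induction m)
  case 0 then show ?case by (simp add: H_def)
next
  case (Suc m)
  have "H (Suc m) (Suc s) = H m (Suc s) + (-1)^(Suc m) * int (Suc s choose Suc m)"
    by (simp add: H_def)
  also have "\<dots> = (-1)^m * int (s choose m) + (-1)^(Suc m) * (int (s choose m) + int (s choose Suc m))"
    using Suc by simp
  also have "\<dots> = (-1)^(Suc m) * int (s choose Suc m)" by (simp add: algebra_simps)
  finally show ?case .
qed

lemma H_zero: "H m 0 = 1"
  by (induction m) (simp_all add: H_def)

lemma H_dvd:
  assumes p: "prime p" and q: "q = p ^ k" and k: "k \<ge> 1" and nd: "\<not> q dvd t"
  shows "int p dvd H (q - 1) t"
proof -
  have "t \<noteq> 0" using nd by (metis dvd_0_right)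
  then obtain s where t: "t = Suc s" by (cases t) auto
  have q1: "Suc (q - 1) = q" using q p k by (simp add: prime_gt_0_nat)
  have eq: "t * (s choose (q - 1)) = (t choose q) * q"
    using Suc_times_binomial_eq[of s "q - 1"] q1 t by simp
  have "p dvd (s choose (q - 1))"
  proof (rule ccontr)
    assume "\<not> p dvd (s choose (q - 1))"
    then have "coprime (p ^ k) (s choose (q - 1))"
      using p by (simp add: prime_imp_coprime)
    moreover have "p ^ k dvd t * (s choose (q - 1))" using eq q by simp
    ultimately have "p ^ k dvd t" using coprime_dvd_mult_left_iff by blast
    with nd q show False by simp
  qed
  then have "int p dvd int (s choose (q - 1))" by simp
  then show ?thesis by (simp add: H_Suc t)
qed


definition rep :: "nat set set \<Rightarrow> (nat set \<Rightarrow> int) \<Rightarrow> bool" where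
  "rep \<K> f \<longleftrightarrow> (\<exists>c. \<forall>X. f X = (\<Sum>K\<in>\<K>. c K * (if K \<subseteq> X then 1 else 0)))"

lemma rep_zero: "rep \<K> (\<lambda>X. 0)"
  unfolding rep_def by (rule exI[of _ "\<lambda>_. 0"]) simp

lemma rep_add: "rep \<K> f \<Longrightarrow> rep \<K> g \<Longrightarrow> rep \<K> (\<lambda>X. f X + g X)"
  unfolding rep_def
proof (elim exE)
  fix c d assume c: "\<forall>X. f X = (\<Sum>K\<in>\<K>. c K * (if K \<subseteq> X then 1 else 0))"
    and d: "\<forall>X. g X = (\<Sum>K\<in>\<K>. d K * (if K \<subseteq> X then 1 else 0))"
  show "\<exists>e. \<forall>X. f X + g X = (\<Sum>K\<in>\<K>. e K * (if K \<subseteq> X then 1 else 0))"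
    by (rule exI[of _ "\<lambda>K. c K + d K"]) (simp add: c d sum.distrib[symmetric] algebra_simps)
qed

lemma rep_smult: "rep \<K> f \<Longrightarrow> rep \<K> (\<lambda>X. a * f X)"
  unfolding rep_def
proof (elim exE)
  fix c assume c: "\<forall>X. f X = (\<Sum>K\<in>\<K>. c K * (if K \<subseteq> X then 1 else 0))"
  show "\<exists>e. \<forall>X. a * f X = (\<Sum>K\<in>\<K>. e K * (if K \<subseteq> X then 1 else 0))"
    by (rule exI[of _ "\<lambda>K. a * c K"]) (simp add: c sum_distrib_left algebra_simps)
qed

lemma rep_sum: "finite I \<Longrightarrow> (\<And>i. i \<in> I \<Longrightarrow> rep \<K> (f i)) \<Longrightarrow> rep \<K> (\<lambda>X. \<Sum>i\<in>I. f i X)"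
proof (induction I rule: finite_induct)
  case empty then show ?case by (simp add: rep_zero)
next
  case (insert x F)
  then show ?case using rep_add[of \<K> "f x" "\<lambda>X. \<Sum>i\<in>F. f i X"] by simp
qed

lemma rep_incl: "finite \<K> \<Longrightarrow> J \<in> \<K> \<Longrightarrow> rep \<K> (\<lambda>X. if J \<subseteq> X then 1 else 0)"
  unfolding rep_def
proof (intro exI allI)
  fix X assume a: "finite \<K>" "J \<in> \<K>"
  have "(\<Sum>K\<in>\<K>. (if K = J then 1 else 0) * (if K \<subseteq> X then 1 else 0))
     = (\<Sum>K\<in>\<K>. if K = J then (if J \<subseteq> X then 1 else 0) else (0::int))"
    by (rule sum.cong) auto
  also have "\<dots> = (if J \<subseteq> X then 1 else 0)" using a by simp
  finally show "(if J \<subseteq> X then 1 else (0::int)) = (\<Sum>K\<in>\<K>. (if K = J then 1 else 0) * (if K \<subseteq> X then 1 else 0))"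
    by (rule sym)
qed

lemma alt_sum: "finite S \<Longrightarrow> (\<Sum>T\<in>Pow S. (-1::int) ^ card T) = (if S = {} then 1 else 0)"
proof (induction S rule: finite_induct)
  case empty then show ?case by simp
next
  case (insert x S)
  have inj: "inj_on (insert x) (Pow S)" using insert(2) by (auto simp: inj_on_def)
  have disj: "Pow S \<inter> insert x ` Pow S = {}" using insert(2) by auto
  have "(\<Sum>T\<in>insert x ` Pow S. (-1::int) ^ card T) = (\<Sum>T\<in>Pow S. (-1::int) ^ card (insert x T))"
    using sum.reindex[OF inj] by simp
  also have "\<dots> = (\<Sum>T\<in>Pow S. - ((-1::int) ^ card T))"
  proof (rule sum.cong)
    fix T assume "T \<in> Pow S"
    then have "x \<notin> T" "finite T" using insert(1,2) finite_subset by auto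
    then show "(-1::int) ^ card (insert x T) = - ((-1) ^ card T)" by simp
  qed simp
  finally have e: "(\<Sum>T\<in>insert x ` Pow S. (-1::int) ^ card T) = - (\<Sum>T\<in>Pow S. (-1::int) ^ card T)"
    by (simp add: sum_negf)
  have "(\<Sum>T\<in>Pow (insert x S). (-1::int) ^ card T) =
        (\<Sum>T\<in>Pow S. (-1::int) ^ card T) + (\<Sum>T\<in>insert x ` Pow S. (-1::int) ^ card T)"
    unfolding Pow_insert by (rule sum.union_disjoint) (use insert(1) disj in auto)
  then show ?case using e by simp
qed

lemma incl_excl: "finite J \<Longrightarrow>
  (if J \<inter> X = {} then 1 else 0) = (\<Sum>T\<in>Pow J. (-1::int) ^ card T * (if T \<subseteq> X then 1 else 0))"
proof -
  assume J: "finite J"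
  have "(\<Sum>T\<in>Pow J. (-1::int) ^ card T * (if T \<subseteq> X then 1 else 0))
      = (\<Sum>T\<in>{T\<in>Pow J. T \<subseteq> X}. (-1::int) ^ card T)"
  proof -
    have "(\<Sum>T\<in>Pow J. (-1::int) ^ card T * (if T \<subseteq> X then 1 else 0))
      = (\<Sum>T\<in>Pow J. if T \<subseteq> X then (-1::int) ^ card T else 0)" by (rule sum.cong) auto
    also have "\<dots> = (\<Sum>T\<in>{T\<in>Pow J. T \<subseteq> X}. (-1::int) ^ card T)"
      by (rule sum.inter_filter[symmetric]) (use J in simp)
    finally show ?thesis .
  qed
  also have "{T\<in>Pow J. T \<subseteq> X} = Pow (J \<inter> X)" by auto
  also have "(\<Sum>T\<in>Pow (J \<inter> X). (-1::int) ^ card T) = (if J \<inter> X = {} then 1 else 0)"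
    using J by (metis alt_sum finite_Int)
  finally show ?thesis by simp
qed

lemma rep_disj: "finite \<K> \<Longrightarrow> J \<in> \<K> \<Longrightarrow> finite J \<Longrightarrow> (\<And>T. T \<subseteq> J \<Longrightarrow> T \<in> \<K>) \<Longrightarrow>
   rep \<K> (\<lambda>X. if J \<inter> X = {} then 1 else 0)"
proof -
  assume a: "finite \<K>" "J \<in> \<K>" "finite J" "\<And>T. T \<subseteq> J \<Longrightarrow> T \<in> \<K>"
  have "rep \<K> (\<lambda>X. \<Sum>T\<in>Pow J. (-1::int) ^ card T * (if T \<subseteq> X then 1 else 0))"
  proof (rule rep_sum)
    fix T assume "T \<in> Pow J"
    then have "rep \<K> (\<lambda>X. if T \<subseteq> X then 1 else 0)" using a by (intro rep_incl) auto
    then show "rep \<K> (\<lambda>X. (-1::int) ^ card T * (if T \<subseteq> X then 1 else 0))" by (rule rep_smult)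
  qed (use a in simp)
  then show ?thesis using incl_excl[OF a(3)] by simp
qed

lemma sum_ind_card: "finite A \<Longrightarrow> (\<Sum>J\<in>A. if P J then 1 else 0) = int (card {J\<in>A. P J})"
  by (simp add: sum.inter_filter[symmetric])

lemma choose_incl: "finite S \<Longrightarrow>
  int (card (S \<inter> X) choose j) = (\<Sum>J\<in>{J. J \<subseteq> S \<and> card J = j}. if J \<subseteq> X then 1 else 0)"
proof -
  assume S: "finite S"
  have "card (S \<inter> X) choose j = card {J. J \<subseteq> S \<inter> X \<and> card J = j}"
    using S by (metis finite_Int n_subsets)
  also have "{J. J \<subseteq> S \<inter> X \<and> card J = j} = {J\<in>{J. J \<subseteq> S \<and> card J = j}. J \<subseteq> X}" by auto
  finally show ?thesis using S by (subst sum_ind_card) auto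
qed

lemma choose_disj: "finite S \<Longrightarrow>
  int (card (S - X) choose j) = (\<Sum>J\<in>{J. J \<subseteq> S \<and> card J = j}. if J \<inter> X = {} then 1 else 0)"
proof -
  assume S: "finite S"
  have "card (S - X) choose j = card {J. J \<subseteq> S - X \<and> card J = j}"
    using S by (metis finite_Diff n_subsets)
  also have "{J. J \<subseteq> S - X \<and> card J = j} = {J\<in>{J. J \<subseteq> S \<and> card J = j}. J \<inter> X = {}}" by auto
  finally show ?thesis using S by (subst sum_ind_card) auto
qed



lemma det_cong:
  fixes A B :: "int mat"
  assumes A: "A \<in> carrier_mat m m" and B: "B \<in> carrier_mat m m"
    and c: "\<And>i j. i < m \<Longrightarrow> j < m \<Longrightarrow> [A $$ (i, j) = B $$ (i, j)] (mod d)"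
  shows "[det A = det B] (mod d)"
proof -
  have "[(\<Sum>p\<in>{p. p permutes {0..<m}}. signof p * (\<Prod>i=0..<m. A $$ (i, p i)))
       = (\<Sum>p\<in>{p. p permutes {0..<m}}. signof p * (\<Prod>i=0..<m. B $$ (i, p i)))] (mod d)"
  proof (rule cong_sum, rule cong_mult)
    fix p assume "p \<in> {p. p permutes {0..<m}}"
    then have p: "p permutes {0..<m}" by simp
    show "[\<Prod>i=0..<m. A $$ (i, p i) = \<Prod>i=0..<m. B $$ (i, p i)] (mod d)"
    proof (rule cong_prod)
      fix i assume i: "i \<in> {0..<m}"
      then have "p i < m" using permutes_in_image[OF p] by auto
      then show "[A $$ (i, p i) = B $$ (i, p i)] (mod d)" using c i by simp
    qed
  qed simp
  then show ?thesis using det_def'[OF A] det_def'[OF B] by simp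
qed

lemma det_zero_row:
  fixes Q :: "int mat"
  assumes Q: "Q \<in> carrier_mat m m" and k: "k < m" and z: "\<And>j. j < m \<Longrightarrow> Q $$ (k, j) = 0"
  shows "det Q = 0"
proof -
  have "(\<Sum>p\<in>{p. p permutes {0..<m}}. signof p * (\<Prod>i=0..<m. Q $$ (i, p i))) = 0"
  proof (rule sum.neutral, rule ballI)
    fix p assume "p \<in> {p. p permutes {0..<m}}"
    then have p: "p permutes {0..<m}" by simp
    have "p k < m" using permutes_in_image[OF p] k by auto
    then have "Q $$ (k, p k) = 0" using z by simp
    then have "(\<Prod>i=0..<m. Q $$ (i, p i)) = 0"
      using k by (intro prod_zero) auto
    then show "signof p * (\<Prod>i=0..<m. Q $$ (i, p i)) = 0" by simp
  qed
  then show ?thesis using det_def'[OF Q] by simp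
qed



lemma card_K: "card {K. K \<subseteq> {1..N} \<and> card K \<le> r} = (\<Sum>i=0..r. N choose i)"
proof -
  have eq: "{K. K \<subseteq> {1..N} \<and> card K \<le> r} = (\<Union>i\<in>{0..r}. {K. K \<subseteq> {1..N} \<and> card K = i})" by auto
  have "card (\<Union>i\<in>{0..r}. {K. K \<subseteq> {1..N} \<and> card K = i}) = (\<Sum>i=0..r. card {K. K \<subseteq> {1..N} \<and> card K = i})"
    by (rule card_UN_disjoint) auto
  also have "\<dots> = (\<Sum>i=0..r. N choose i)" by (simp add: n_subsets)
  finally show ?thesis using eq by simp
qed

lemma rep_diff:
  assumes A: "A \<subseteq> {1..N}"
  shows "rep {K. K \<subseteq> {1..N} \<and> card K \<le> r} (\<lambda>X. H r (card (A - X)))"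
proof -
  let ?K = "{K. K \<subseteq> {1..N} \<and> card K \<le> r}"
  have fA: "finite A" using A finite_subset by blast
  have fK: "finite ?K" by (rule finite_subset[of _ "Pow {1..N}"]) auto
  have "rep ?K (\<lambda>X. \<Sum>j=0..r. (-1)^j * (\<Sum>J\<in>{J. J \<subseteq> A \<and> card J = j}. if J \<inter> X = {} then 1 else 0))"
  proof (rule rep_sum)
    fix j assume j: "j \<in> {0..r}"
    have "rep ?K (\<lambda>X. \<Sum>J\<in>{J. J \<subseteq> A \<and> card J = j}. if J \<inter> X = {} then 1 else 0)"
    proof (rule rep_sum)
      fix J assume J: "J \<in> {J. J \<subseteq> A \<and> card J = j}"
      have fJ: "finite J" using J fA finite_subset by blast
      show "rep ?K (\<lambda>X. if J \<inter> X = {} then 1 else 0)"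
      proof (rule rep_disj[OF fK _ fJ])
        show "J \<in> ?K" using J j A by auto
        fix T assume "T \<subseteq> J"
        then have "T \<subseteq> {1..N}" using J A by blast
        moreover have "card T \<le> r" using card_mono[OF fJ \<open>T \<subseteq> J\<close>] J j by simp
        ultimately show "T \<in> ?K" by simp
      qed
    qed (use fA in simp)
    then show "rep ?K (\<lambda>X. (-1)^j * (\<Sum>J\<in>{J. J \<subseteq> A \<and> card J = j}. if J \<inter> X = {} then 1 else 0))"
      by (rule rep_smult)
  qed simp
  moreover have "H r (card (A - X)) = (\<Sum>j=0..r. (-1)^j * (\<Sum>J\<in>{J. J \<subseteq> A \<and> card J = j}. if J \<inter> X = {} then 1 else 0))" for X
    unfolding H_def by (simp only: choose_disj[OF fA])
  ultimately show ?thesis by simp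
qed

lemma rep_int:
  assumes A: "A \<subseteq> {1..N}"
  shows "rep {K. K \<subseteq> {1..N} \<and> card K \<le> r} (\<lambda>X. H r (card (X \<inter> A)))"
proof -
  let ?K = "{K. K \<subseteq> {1..N} \<and> card K \<le> r}"
  have fA: "finite A" using A finite_subset by blast
  have fK: "finite ?K" by (rule finite_subset[of _ "Pow {1..N}"]) auto
  have "rep ?K (\<lambda>X. \<Sum>j=0..r. (-1)^j * (\<Sum>J\<in>{J. J \<subseteq> A \<and> card J = j}. if J \<subseteq> X then 1 else 0))"
  proof (rule rep_sum)
    fix j assume j: "j \<in> {0..r}"
    have "rep ?K (\<lambda>X. \<Sum>J\<in>{J. J \<subseteq> A \<and> card J = j}. if J \<subseteq> X then 1 else 0)"
    proof (rule rep_sum)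
      fix J assume J: "J \<in> {J. J \<subseteq> A \<and> card J = j}"
      show "rep ?K (\<lambda>X. if J \<subseteq> X then 1 else 0)"
        by (rule rep_incl[OF fK]) (use J j A in auto)
    qed (use fA in simp)
    then show "rep ?K (\<lambda>X. (-1)^j * (\<Sum>J\<in>{J. J \<subseteq> A \<and> card J = j}. if J \<subseteq> X then 1 else 0))"
      by (rule rep_smult)
  qed simp
  moreover have "H r (card (X \<inter> A)) = (\<Sum>j=0..r. (-1)^j * (\<Sum>J\<in>{J. J \<subseteq> A \<and> card J = j}. if J \<subseteq> X then 1 else 0))" for X
    unfolding H_def Int_commute[of X A] by (simp only: choose_incl[OF fA])
  ultimately show ?thesis by simp
qed

theorem mainTheorem2:
  fixes q n :: nat and F :: "nat set set"
  assumes "prime_power q"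
    and "F \<subseteq> Pow {1..n}"
    and "\<forall>A\<in>F. \<forall>B\<in>F. A \<noteq> B \<longrightarrow> \<not> (q dvd card (A - B))"
  shows "card F \<le> (\<Sum>i=0..q-1. (n - 1) choose i)"
proof -
  obtain p k where p: "prime p" and k: "k \<ge> 1" and q: "q = p ^ k"
    using assms(1) unfolding prime_power_def by blast
  have p1: "p > 1" using p prime_gt_1_nat by blast
  define N where "N = n - 1"
  define r where "r = q - 1"
  define KK where "KK = {K. K \<subseteq> {1..N} \<and> card K \<le> r}"
  define g where "g A X = (if n \<in> A then H r (card (X \<inter> ({1..N} - A))) else H r (card (A - X)))" for A X
  have rep: "rep KK (g A)" if "A \<in> F" for A
  proof (cases "n \<in> A")
    case True then show ?thesis using rep_int[of "{1..N} - A" N r] unfolding g_def KK_def by simp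
  next
    case False
    have "A \<subseteq> {1..N}"
    proof
      fix x assume "x \<in> A"
      then have "x \<in> {1..n}" using that assms(2) by blast
      moreover have "x \<noteq> n" using \<open>x \<in> A\<close> False by blast
      ultimately show "x \<in> {1..N}" unfolding N_def by auto
    qed
    then show ?thesis using rep_diff[of A N r] False unfolding g_def KK_def by simp
  qed
  then have "\<forall>A\<in>F. \<exists>c. \<forall>X. g A X = (\<Sum>K\<in>KK. c K * (if K \<subseteq> X then 1 else 0))"
    unfolding rep_def by blast
  from bchoice[OF this] obtain c where c0: "\<forall>A\<in>F. \<forall>X. g A X = (\<Sum>K\<in>KK. c A K * (if K \<subseteq> X then 1 else 0))"
    by blast
  then have c: "\<And>A X. A \<in> F \<Longrightarrow> g A X = (\<Sum>K\<in>KK. c A K * (if K \<subseteq> X then 1 else 0))"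
    by blast
  have delta: "[g A (B - {n}) = (if A = B then 1 else 0)] (mod int p)" if AB: "A \<in> F" "B \<in> F" for A B
  proof (cases "n \<in> A")
    case True
    have e: "(B - {n}) \<inter> ({1..N} - A) = B - A"
    proof
      show "B - A \<subseteq> (B - {n}) \<inter> ({1..N} - A)"
      proof
        fix x assume x: "x \<in> B - A"
        then have "x \<in> {1..n}" using AB assms(2) by blast
        moreover have "x \<noteq> n" using x True by blast
        ultimately
        show "x \<in> (B - {n}) \<inter> ({1..N} - A)" using x unfolding N_def by auto
      qed
    qed auto
    have g: "g A (B - {n}) = H r (card (B - A))" using True e by (simp add: g_def)
    show ?thesis
    proof (cases "A = B")
      case True then show ?thesis using g by (simp add: H_zero)
    next
      case False
      then have "\<not> q dvd card (B - A)" using assms(3) AB by auto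
      then have "int p dvd H r (card (B - A))" using H_dvd[OF p q k] r_def by simp
      then show ?thesis using False g by (simp add: cong_0_iff)
    qed
  next
    case False
    have e: "A - (B - {n}) = A - B" using False by auto
    have g: "g A (B - {n}) = H r (card (A - B))" using False e by (simp add: g_def)
    show ?thesis
    proof (cases "A = B")
      case True then show ?thesis using g by (simp add: H_zero)
    next
      case False
      then have "\<not> q dvd card (A - B)" using assms(3) AB by auto
      then have "int p dvd H r (card (A - B))" using H_dvd[OF p q k] r_def by simp
      then show ?thesis using False g by (simp add: cong_0_iff)
    qed
  qed
  have fF: "finite F" using assms(2) finite_subset by blast
  have fK: "finite KK" unfolding KK_def by (rule finite_subset[of _ "Pow {1..N}"]) auto
  obtain fs where fs: "distinct fs" "set fs = F" using finite_distinct_list[OF fF] by blast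
  obtain ks where ks: "distinct ks" "set ks = KK" using finite_distinct_list[OF fK] by blast
  define m where "m = length fs"
  define kk where "kk = length ks"
  have cF: "card F = m" using fs distinct_card m_def by metis
  have cK: "card KK = kk" using ks distinct_card kk_def by metis
  have cK2: "card KK = (\<Sum>i=0..q-1. (n - 1) choose i)"
    unfolding KK_def N_def r_def by (rule card_K)
  show ?thesis
  proof (rule ccontr)
    assume "\<not> ?thesis"
    then have kk: "kk < m" using cF cK cK2 by simp
    define P where "P = mat m m (\<lambda>(i,j). if j < kk then c (fs!i) (ks!j) else 0)"
    define Q where "Q = mat m m (\<lambda>(j,l). if j < kk then (if ks!j \<subseteq> fs!l - {n} then 1 else 0) else (0::int))"
    have PQ: "(P * Q) $$ (i, l) = g (fs!i) (fs!l - {n})" if il: "i < m" "l < m" for i l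
    proof -
      have "(P * Q) $$ (i, l) = (\<Sum>j\<in>{0..<m}. P $$ (i, j) * Q $$ (j, l))"
        using il by (simp add: P_def Q_def scalar_prod_def)
      also have "\<dots> = (\<Sum>j\<in>{0..<kk}. P $$ (i, j) * Q $$ (j, l))"
        by (rule sum.mono_neutral_right) (use kk il in \<open>auto simp: P_def Q_def\<close>)
      also have "\<dots> = (\<Sum>j\<in>{0..<kk}. c (fs!i) (ks!j) * (if ks!j \<subseteq> fs!l - {n} then 1 else 0))"
        by (rule sum.cong) (use kk il in \<open>auto simp: P_def Q_def\<close>)
      also have "\<dots> = (\<Sum>K\<in>KK. c (fs!i) K * (if K \<subseteq> fs!l - {n} then 1 else 0))"
      proof -
        have bij: "bij_betw (nth ks) {0..<kk} KK"
          unfolding bij_betw_def using ks kk_def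
          by (auto simp: inj_on_nth set_conv_nth)
        show ?thesis
          by (rule sum.reindex_bij_betw[OF bij])
      qed
      also have "\<dots> = g (fs!i) (fs!l - {n})"
        using c[of "fs!i"] fs il m_def by auto
      finally show ?thesis .
    qed
    have PQc: "P * Q \<in> carrier_mat m m"
      by (rule mult_carrier_mat[of _ m m _ m]) (auto simp: P_def Q_def)
    have cg: "[det (P * Q) = det (1\<^sub>m m)] (mod int p)"
    proof (rule det_cong[OF PQc one_carrier_mat])
      fix i l assume il: "i < m" "l < m"
      have "(fs!i = fs!l) = (i = l)" using fs il m_def nth_eq_iff_index_eq by blast
      moreover have "fs!i \<in> F" "fs!l \<in> F" using fs il m_def by auto
      ultimately show "[(P * Q) $$ (i, l) = 1\<^sub>m m $$ (i, l)] (mod int p)"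
        using PQ[OF il] delta[of "fs!i" "fs!l"] il by simp
    qed
    have "det Q = 0"
      by (rule det_zero_row[of Q m kk]) (use kk in \<open>auto simp: Q_def\<close>)
    then have "det (P * Q) = 0"
      using det_mult[of P m Q] by (simp add: P_def Q_def)
    then have "[0 = 1] (mod int p)" using cg by simp
    then show False using p1 by (simp add: cong_def)
  qed
qed

end
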